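(* Let $G$ be a compact abelian group which is a torsion group (every element has finite order), and let $K \subset \widehat{G}$. Then $K$ is strictly positive definite if and only if $K$ is ubiquitous.
   Context: A trigonometric polynomial on $\widehat{G}$ is a function of the form $\gamma \mapsto \sum_{i=1}^n c_i \gamma(x_i)$ with $x_i \in G$, $c_i \in \mathbb{C}$. A subset $K \subset \widehat{G}$ is strictly positive definite if the only trigonometric polynomial on $\widehat{G}$ vanishing at every point of $K$ is the identically zero function. A subset $K \subset \widehat{G}$ is ubiquitous if for every subgroup $H$ of $\widehat{G}$ of finite index and every $\gamma \in \widehat{G}$ the coset $\gamma H$ meets $K$. *)

theory Defs
  imports "HOL-Analysis.Analysis" "HOL-Algebra.Coset"
begin

definition characters :: "('a::topological_ab_group_add \<Rightarrow> complex) set" where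
  "characters = {\<gamma>. continuous_on UNIV \<gamma> \<and> (\<forall>x y. \<gamma> (x + y) = \<gamma> x * \<gamma> y)
                      \<and> (\<forall>x. norm (\<gamma> x) = 1)}"

definition dual_group :: "('a::topological_ab_group_add \<Rightarrow> complex) monoid" where
  "dual_group = \<lparr>carrier = characters, mult = (\<lambda>\<gamma> \<eta> x. \<gamma> x * \<eta> x), one = (\<lambda>x. 1)\<rparr>"

definition trig_poly :: "'a set \<Rightarrow> ('a \<Rightarrow> complex) \<Rightarrow> ('a \<Rightarrow> complex) \<Rightarrow> complex" where
  "trig_poly S c \<gamma> = (\<Sum>x\<in>S. c x * \<gamma> x)"

definition strictly_positive_definite :: "('a::topological_ab_group_add \<Rightarrow> complex) set \<Rightarrow> bool" where
  "strictly_positive_definite K \<longleftrightarrow>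
     (\<forall>S c. finite S \<longrightarrow> (\<forall>\<gamma>\<in>K. trig_poly S c \<gamma> = 0) \<longrightarrow>
            (\<forall>\<gamma>\<in>characters. trig_poly S c \<gamma> = 0))"

definition ubiquitous :: "('a::topological_ab_group_add \<Rightarrow> complex) set \<Rightarrow> bool" where
  "ubiquitous K \<longleftrightarrow>
     (\<forall>H. subgroup H dual_group \<and> finite (rcosets\<^bsub>dual_group\<^esub> H) \<longrightarrow>
        (\<forall>\<gamma>\<in>carrier dual_group. (\<gamma> <#\<^bsub>dual_group\<^esub> H) \<inter> K \<noteq> {}))"

end

theory Submission imports Defs begin


lemma charD:
  assumes "\<gamma> \<in> characters"
  shows "\<gamma> (x+y) = \<gamma> x * \<gamma> y" "norm (\<gamma> x) = 1" "continuous_on UNIV \<gamma>"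
  using assms by (auto simp: characters_def)

lemma char_nz: "\<gamma> \<in> characters \<Longrightarrow> \<gamma> x \<noteq> 0"
  using charD(2)[of \<gamma> x] by auto

lemma char_0: assumes "\<gamma> \<in> characters" shows "\<gamma> 0 = 1"
proof -
  have "\<gamma> 0 = \<gamma> 0 * \<gamma> 0" using charD(1)[OF assms, of 0 0] by simp
  thus ?thesis using char_nz[OF assms, of 0] by simp
qed

lemma norm1_cnj: "norm (z::complex) = 1 \<Longrightarrow> z * cnj z = 1"
  by (metis complex_norm_square of_real_1 power_one)

lemma norm1_cnj': "norm (z::complex) = 1 \<Longrightarrow> cnj z * z = 1"
  by (metis norm1_cnj mult.commute)

lemma char_cnj: "\<gamma> \<in> characters \<Longrightarrow> \<gamma> x * cnj (\<gamma> x) = 1"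
  using charD(2) norm1_cnj by blast

lemma char_uminus: assumes "\<gamma> \<in> characters" shows "\<gamma> (-x) = cnj (\<gamma> x)"
proof -
  have "\<gamma> (-x) * \<gamma> x = 1" using charD(1)[OF assms, of "-x" x] char_0[OF assms] by simp
  hence "\<gamma> (-x) * (\<gamma> x * cnj (\<gamma> x)) = cnj (\<gamma> x)" by (simp only: mult.assoc[symmetric] mult_1)
  thus ?thesis unfolding char_cnj[OF assms, of x] by simp
qed

lemma char_diff: "\<gamma> \<in> characters \<Longrightarrow> \<gamma> (x - y) = \<gamma> x * cnj (\<gamma> y)"
  by (subst diff_conv_add_uminus, subst charD(1)) (simp_all add: char_uminus)

lemma char_sum: "\<gamma> \<in> characters \<Longrightarrow> \<gamma> (\<Sum>i<n. x) = \<gamma> x ^ n"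
  by (induction n) (auto simp: char_0 charD(1))

lemma char_mult_closed:
  "\<gamma> \<in> characters \<Longrightarrow> \<eta> \<in> characters \<Longrightarrow> (\<lambda>x. \<gamma> x * \<eta> x) \<in> characters"
  unfolding characters_def by (auto intro!: continuous_on_mult simp: norm_mult)

lemma char_cnj_closed:
  "\<gamma> \<in> characters \<Longrightarrow> (\<lambda>x. cnj (\<gamma> x)) \<in> characters"
  unfolding characters_def by (auto intro!: continuous_on_cnj)

lemma char_one: "(\<lambda>x. 1) \<in> characters"
  unfolding characters_def by auto

lemma char_pow_closed:
  "\<gamma> \<in> characters \<Longrightarrow> (\<lambda>x. \<gamma> x ^ n) \<in> characters"
  by (induction n) (auto simp: char_one intro: char_mult_closed[of \<gamma>, simplified])


lemma dual_simps [simp]: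
  "carrier dual_group = characters" "mult dual_group = (\<lambda>\<gamma> \<eta> x. \<gamma> x * \<eta> x)"
  "one dual_group = (\<lambda>x. 1)"
  by (auto simp: dual_group_def)

lemma dual_comm_group: "comm_group (dual_group :: ('a::topological_ab_group_add \<Rightarrow> complex) monoid)"
proof (rule comm_groupI, goal_cases)
  case (6 x)
  hence xc: "x \<in> characters" by simp
  have e: "(\<lambda>y. cnj (x y) * x y) = (\<lambda>y. 1)" using charD(2)[OF xc] norm1_cnj' by auto
  show ?case
    by (rule bexI[of _ "\<lambda>y. cnj (x y)"]) (simp_all add: e char_cnj_closed xc)
next
  case (1 x y) thus ?case by (simp add: char_mult_closed)
next
  case 2 thus ?case by (simp add: char_one)
next
  case (3 x y z) thus ?case by (simp add: mult.assoc)
next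
  case (4 x y) thus ?case by (simp add: mult.commute)
next
  case (5 x) thus ?case by simp
qed

lemma dual_group: "group (dual_group :: ('a::topological_ab_group_add \<Rightarrow> complex) monoid)"
  using dual_comm_group comm_group.axioms(2) by blast

lemma dual_inv: "\<gamma> \<in> characters \<Longrightarrow> inv\<^bsub>dual_group\<^esub> \<gamma> = (\<lambda>x. cnj (\<gamma> x))"
  by (rule group.inv_equality[OF dual_group])
     (simp_all add: char_cnj_closed charD(2) norm1_cnj')

lemma dual_pow: "\<gamma> [^]\<^bsub>dual_group\<^esub> (n::nat) = (\<lambda>x. \<gamma> x ^ n)"
  by (induction n) (simp_all add: mult.commute)


lemma char_root:
  fixes \<gamma> :: "'a::topological_ab_group_add \<Rightarrow> complex"
  assumes tors: "\<forall>x::'a::topological_ab_group_add. \<exists>n::nat. n > 0 \<and> (\<Sum>i<n. x) = 0"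
    and g: "\<gamma> \<in> characters"
  shows "\<exists>n>0. \<gamma> x ^ n = 1"
proof -
  from tors obtain n :: nat where n: "n > 0" "(\<Sum>i<n. x) = 0" by blast
  have "\<gamma> x ^ n = 1" using char_sum[OF g, where n=n and x=x] n(2) char_0[OF g] by simp
  thus ?thesis using n(1) by blast
qed

lemma char_finite_image:
  fixes \<gamma> :: "'a::topological_ab_group_add \<Rightarrow> complex"
  assumes cpt: "compact (UNIV::'a set)"
    and tors: "\<forall>x::'a. \<exists>n::nat. n > 0 \<and> (\<Sum>i<n. x) = 0"
    and g: "\<gamma> \<in> characters"
  shows "finite (range \<gamma>)"
proof -
  define V where "V = range \<gamma>"
  have cV: "compact V" unfolding V_def using compact_continuous_image[OF charD(3)[OF g] cpt] .
  have clV: "closed V" using cV compact_imp_closed by blast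
  have mul: "u * cnj v * w \<in> V" if hh: "u \<in> V" "v \<in> V" "w \<in> V" for u v w
  proof -
    obtain a b c where "u = \<gamma> a" "v = \<gamma> b" "w = \<gamma> c" using hh unfolding V_def by blast
    hence "u * cnj v * w = \<gamma> ((a - b) + c)" by (simp add: charD(1)[OF g] char_diff[OF g])
    thus ?thesis unfolding V_def by blast
  qed
  have nm: "norm v = 1" if "v \<in> V" for v using that charD(2)[OF g] unfolding V_def by blast
  have V0: "1 \<in> V" unfolding V_def using char_0[OF g] by (metis rangeI)
  have ctbl: "countable V"
  proof -
    have "V \<subseteq> (\<Union>n. {z. z^(Suc n) = 1})"
    proof
      fix v assume "v \<in> V"
      then obtain x where "v = \<gamma> x" unfolding V_def by blast
      then obtain n where "n > 0" "v ^ n = 1" using char_root[OF tors g, of x] by blast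
      hence "v ^ Suc (n - 1) = 1" by simp
      thus "v \<in> (\<Union>n. {z. z^(Suc n) = 1})" by blast
    qed
    moreover have "countable (\<Union>n. {z::complex. z^(Suc n) = 1})"
    proof (rule countable_UN)
      fix n :: nat
      show "countable {z::complex. z^(Suc n) = 1}"
        by (rule countable_finite, rule finite_roots_unity) simp
    qed simp
    ultimately show ?thesis using countable_subset by blast
  qed
  have iso: "\<exists>v\<in>V. \<not> v islimpt V"
  proof (rule ccontr)
    assume "\<not> ?thesis" hence lim: "\<forall>v\<in>V. v islimpt V" by blast
    define G where "G = (\<lambda>v. V - {v}) ` V"
    have "V \<subseteq> closure (\<Inter>G)"
    proof (rule Baire[OF clV])
      show "countable G" using ctbl G_def by simp
    next
      fix T assume "T \<in> G"
      then obtain v where v: "v \<in> V" "T = V - {v}" unfolding G_def by blast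
      have "T = V \<inter> (- {v})" using v by blast
      moreover have "open (- {v})" by (simp add: open_Compl)
      ultimately have o: "openin (top_of_set V) T" using openin_open_Int[of "- {v}" V] by simp
      have "V \<subseteq> closure T"
      proof
        fix u assume u: "u \<in> V"
        show "u \<in> closure T"
        proof (cases "u = v")
          case False
          hence "u \<in> T" using u v by simp
          thus ?thesis using closure_subset[of T] by (rule subsetD[rotated])
        next
          case True
          have "u islimpt T"
            unfolding islimpt_approachable
          proof (intro allI impI)
            fix e :: real assume "0 < e"
            from lim u this obtain y where "y \<in> V" "y \<noteq> u" "dist y u < e"
              unfolding islimpt_approachable by blast
            thus "\<exists>x'\<in>T. x' \<noteq> u \<and> dist x' u < e" using v True by auto
          qed
          thus ?thesis unfolding closure_def by simp
        qed
      qed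
      with o show "openin (top_of_set V) T \<and> V \<subseteq> closure T" by (rule conjI)
    qed
    moreover have "\<Inter>G = {}" unfolding G_def using V0 by blast
    ultimately show False using V0 by simp
  qed
  then obtain v0 where v0: "v0 \<in> V" "\<not> v0 islimpt V" by blast
  have nolim: "\<not> u islimpt V" for u
  proof
    assume u: "u islimpt V"
    hence uV: "u \<in> V" using clV closed_limpt by blast
    have "v0 islimpt V"
      unfolding islimpt_approachable
    proof (intro allI impI)
      fix e :: real assume "0 < e"
      from u this obtain y where y: "y \<in> V" "y \<noteq> u" "dist y u < e"
        unfolding islimpt_approachable by blast
      define c where "c = v0 * cnj u"
      have cV: "c * y \<in> V" unfolding c_def using mul[OF v0(1) uV y(1)] .
      have nc: "norm c = 1" unfolding c_def using nm[OF v0(1)] nm[OF uV] by (simp add: norm_mult)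
      have cu: "c * u = v0" unfolding c_def using norm1_cnj'[OF nm[OF uV]]
        by (simp add: mult.assoc)
      have d: "dist (c * y) v0 = dist y u"
        unfolding dist_norm cu[symmetric] by (simp add: right_diff_distrib[symmetric] norm_mult nc)
      have "c * y \<noteq> v0" using y(2) cu nc by auto
      thus "\<exists>x'\<in>V. x' \<noteq> v0 \<and> dist x' v0 < e" using cV d y(3) by metis
    qed
    with v0 show False by simp
  qed
  show "finite (range \<gamma>)"
  proof (rule ccontr)
    assume "infinite (range \<gamma>)"
    hence "infinite V" unfolding V_def .
    from Heine_Borel_imp_Bolzano_Weierstrass[OF cV this subset_refl] nolim show False by blast
  qed
qed


definition sg :: "'a::ab_group_add set \<Rightarrow> bool" where
  "sg G0 \<longleftrightarrow> 0 \<in> G0 \<and> (\<forall>x\<in>G0. \<forall>y\<in>G0. x + y \<in> G0 \<and> x - y \<in> G0)"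

lemma sg_sum: fixes n :: nat shows "sg G0 \<Longrightarrow> x \<in> G0 \<Longrightarrow> (\<Sum>i<n. x) \<in> G0"
  by (induction n) (auto simp: sg_def)

lemma sg_diff: "sg G0 \<Longrightarrow> x \<in> G0 \<Longrightarrow> y \<in> G0 \<Longrightarrow> x - y \<in> G0"
  by (auto simp: sg_def)

lemma cnj_eq1: "(z::complex) * cnj w = 1 \<Longrightarrow> norm w = 1 \<Longrightarrow> z = w"
proof -
  assume h: "z * cnj w = 1" "norm w = 1"
  have "z = z * (cnj w * w)" using norm1_cnj'[OF h(2)] by simp
  also have "\<dots> = (z * cnj w) * w" by (simp add: mult.assoc)
  also have "\<dots> = w" using h(1) by simp
  finally show ?thesis .
qed

lemma one_char:
  fixes \<eta> \<kappa> :: "'a::topological_ab_group_add \<Rightarrow> complex"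
  assumes cpt: "compact (UNIV::'a set)"
    and tors: "\<forall>x::'a. \<exists>n::nat. n > 0 \<and> (\<Sum>i<n. x) = 0"
    and e: "\<eta> \<in> characters" and c: "\<kappa> \<in> characters" and G0: "sg G0"
    and hyp: "\<forall>x\<in>G0. \<eta> x = 1 \<longrightarrow> \<kappa> x = 1"
  shows "\<exists>a::nat. \<forall>x\<in>G0. \<kappa> x = \<eta> x ^ a"
proof -
  have finV: "finite (range \<eta>)" by (rule char_finite_image[OF cpt tors e])
  have "\<forall>v\<in>range \<eta>. \<exists>n>0. v^n = 1" using char_root[OF tors e] by blast
  then obtain nf where nf: "\<forall>v\<in>range \<eta>. nf v > (0::nat) \<and> v ^ nf v = 1" by metis
  define N where "N = (\<Prod>v\<in>range \<eta>. nf v)"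
  have Npos: "N > 0" unfolding N_def using nf by (intro prod_pos) blast
  have vN: "v ^ N = 1" if vr: "v \<in> range \<eta>" for v
  proof -
    have "nf v dvd N" unfolding N_def using finV vr by (rule dvd_prodI)
    then obtain k where "N = nf v * k" by (auto simp: dvd_def)
    moreover have "v ^ nf v = 1" using nf vr by blast
    ultimately show ?thesis by (simp add: power_mult)
  qed
  define \<omega> where "\<omega> = cis (2 * pi / real N)"
  have omega_all: "\<exists>j. z = \<omega> ^ j" if zN: "z ^ N = 1" for z
  proof -
    from Complex.bij_betw_roots_unity[OF Npos] zN obtain k where "z = cis (2*pi*real k / real N)"
      unfolding bij_betw_def by auto
    also have "\<dots> = \<omega> ^ k" unfolding \<omega>_def Complex.DeMoivre by (simp add: field_simps)
    finally show ?thesis by blast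
  qed
  have omN: "\<omega> ^ N = 1" unfolding \<omega>_def unfolding Complex.DeMoivre using Npos by simp
  have n\<omega>: "norm \<omega> = 1" by (simp add: \<omega>_def)
  define W where "W = \<eta> ` G0"
  have G00: "0 \<in> G0" using G0 by (simp add: sg_def)
  have W1: "1 \<in> W" unfolding W_def using char_0[OF e] G00 by (metis image_eqI)
  have ex: "\<exists>k. 0 < k \<and> \<omega> ^ k \<in> W" using omN Npos W1 by metis
  define d where "d = (LEAST k. 0 < k \<and> \<omega> ^ k \<in> W)"
  have d: "0 < d \<and> \<omega> ^ d \<in> W" unfolding d_def by (rule LeastI_ex[OF ex])
  have dmin: "\<not> (0 < k \<and> \<omega> ^ k \<in> W)" if kd: "k < d" for k
    using not_less_Least[of k "\<lambda>k. 0 < k \<and> \<omega> ^ k \<in> W"] kd unfolding d_def by blast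
  define \<zeta> where "\<zeta> = \<omega> ^ d"
  obtain x0 where x0: "x0 \<in> G0" "\<eta> x0 = \<zeta>" using d unfolding W_def \<zeta>_def by (metis imageE)
  have n\<zeta>: "norm (\<zeta> ^ q) = 1" for q by (simp add: \<zeta>_def n\<omega> norm_power)
  have ysub: "\<eta> (x - (\<Sum>i<q. x0)) = \<eta> x * cnj (\<zeta> ^ q)" for x q
    using char_diff[OF e] char_sum[OF e] x0(2) by simp
  have gen: "\<exists>q. \<eta> x = \<zeta> ^ q" if xG: "x \<in> G0" for x
  proof -
    have "(\<eta> x)^N = 1" using vN by auto
    then obtain k where k: "\<eta> x = \<omega> ^ k" using omega_all by blast
    define q where "q = k div d"
    define r where "r = k mod d"
    have kk: "\<omega> ^ k = \<omega> ^ r * \<zeta> ^ q"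
      unfolding q_def r_def \<zeta>_def by (metis mod_div_mult_eq power_add power_mult mult.commute)
    have yG: "x - (\<Sum>i<q. x0) \<in> G0" using G0 xG x0(1) by (intro sg_diff sg_sum)
    have "\<eta> (x - (\<Sum>i<q. x0)) = \<omega> ^ r * (\<zeta> ^ q * cnj (\<zeta> ^ q))"
      unfolding ysub k kk by (simp add: mult.assoc)
    also have "\<dots> = \<omega> ^ r" using norm1_cnj[OF n\<zeta>] by simp
    finally have "\<omega> ^ r \<in> W" using yG unfolding W_def by (metis image_eqI)
    moreover have "r < d" using d unfolding r_def by simp
    ultimately have "r = 0" using dmin[of r] by auto
    hence "\<eta> x = \<zeta> ^ q" using k kk by simp
    thus ?thesis by blast
  qed
  have exm: "\<exists>m. 0 < m \<and> \<zeta> ^ m = 1"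
    using Npos omN unfolding \<zeta>_def by (metis power_mult mult.commute power_one)
  define m where "m = (LEAST m. 0 < m \<and> \<zeta> ^ m = 1)"
  have m: "0 < m \<and> \<zeta> ^ m = 1" unfolding m_def by (rule LeastI_ex[OF exm])
  have mmin: "\<not> (0 < k \<and> \<zeta> ^ k = 1)" if km: "k < m" for k
    using not_less_Least[of k "\<lambda>k. 0 < k \<and> \<zeta> ^ k = 1"] km unfolding m_def by blast
  have nz: "\<zeta> \<noteq> 0" using n\<zeta>[of 1] by auto
  have neq: "\<zeta> ^ i \<noteq> \<zeta> ^ j" if ij: "i < j" "j < m" for i j
  proof
    assume eq: "\<zeta> ^ i = \<zeta> ^ j"
    have "\<zeta> ^ j = \<zeta> ^ i * \<zeta> ^ (j - i)" using ij by (simp add: power_add[symmetric])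
    hence "\<zeta> ^ (j - i) = 1" using eq nz by simp
    moreover have "j - i < m" "0 < j - i" using ij by auto
    ultimately show False using mmin by blast
  qed
  have inj: "inj_on (\<lambda>j. \<zeta> ^ j) {..<m}"
  proof (rule inj_onI)
    fix i j assume "i \<in> {..<m}" "j \<in> {..<m}" "\<zeta> ^ i = \<zeta> ^ j"
    thus "i = j" using neq[of i j] neq[of j i] by (metis lessThan_iff linorder_neqE_nat)
  qed
  have roots: "{z. z^m = 1} = (\<lambda>j. \<zeta>^j) ` {..<m}"
  proof -
    have sub: "(\<lambda>j. \<zeta>^j) ` {..<m} \<subseteq> {z. z^m = 1}"
    proof
      fix z assume "z \<in> (\<lambda>j. \<zeta>^j) ` {..<m}"
      then obtain j where j: "z = \<zeta> ^ j" by blast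
      have "z ^ m = (\<zeta> ^ m) ^ j" unfolding j power_mult[symmetric] by (simp add: mult.commute)
      thus "z \<in> {z. z^m = 1}" using m by simp
    qed
    have "card {z::complex. z^m = 1} \<le> m" using card_roots_unity[of m] m by simp
    also have "m = card ((\<lambda>j. \<zeta>^j) ` {..<m})" using card_image[OF inj] by simp
    finally have cle: "card {z::complex. z^m = 1} \<le> card ((\<lambda>j. \<zeta>^j) ` {..<m})" .
    have "finite {z::complex. z^m = 1}" using finite_roots_unity[of m] m by simp
    from card_seteq[OF this sub cle] show ?thesis by simp
  qed
  have "\<kappa> x0 ^ m = 1"
  proof -
    have sG: "(\<Sum>i<m. x0) \<in> G0" using G0 x0(1) by (rule sg_sum)
    have "\<eta> (\<Sum>i<m. x0) = 1" using char_sum[OF e] x0(2) m by simp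
    hence "\<kappa> (\<Sum>i<m. x0) = 1" using hyp sG by blast
    thus ?thesis using char_sum[OF c] by simp
  qed
  then obtain a where a: "\<kappa> x0 = \<zeta> ^ a" using roots by blast
  show ?thesis
  proof (intro exI ballI)
    fix x assume xG: "x \<in> G0"
    obtain q where q: "\<eta> x = \<zeta> ^ q" using gen[OF xG] by blast
    have yG: "x - (\<Sum>i<q. x0) \<in> G0" using G0 xG x0(1) by (intro sg_diff sg_sum)
    have "\<eta> (x - (\<Sum>i<q. x0)) = 1" unfolding ysub q using norm1_cnj[OF n\<zeta>] by simp
    hence "\<kappa> (x - (\<Sum>i<q. x0)) = 1" using hyp yG by blast
    hence "\<kappa> x * cnj (\<kappa> x0 ^ q) = 1" using char_diff[OF c] char_sum[OF c] by simp
    hence "\<kappa> x = \<kappa> x0 ^ q" by (rule cnj_eq1) (simp add: charD(2)[OF c] norm_power)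
    thus "\<kappa> x = \<eta> x ^ a" unfolding q a by (simp add: power_mult[symmetric] mult.commute)
  qed
qed


lemma pow_in_subgroup:
  assumes H: "subgroup H dual_group" and eH: "\<eta> \<in> H"
  shows "(\<lambda>x. \<eta> x ^ (a::nat)) \<in> H"
proof (induction a)
  case 0
  show ?case using subgroup.one_closed[OF H] by simp
next
  case (Suc a)
  have "(\<lambda>x. \<eta> x ^ a) \<otimes>\<^bsub>dual_group\<^esub> \<eta> \<in> H" by (rule subgroup.m_closed[OF H Suc eH])
  thus ?case by (simp add: mult.commute)
qed

lemma multi_char:
  fixes H :: "('a::topological_ab_group_add \<Rightarrow> complex) set"
  assumes cpt: "compact (UNIV::'a set)"
    and tors: "\<forall>x::'a. \<exists>n::nat. n > 0 \<and> (\<Sum>i<n. x) = 0"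
    and H: "subgroup H dual_group" and F: "finite F"
  shows "F \<subseteq> H \<Longrightarrow> sg G0 \<Longrightarrow> \<kappa> \<in> characters \<Longrightarrow> (\<forall>x\<in>G0. (\<forall>\<eta>\<in>F. \<eta> x = 1) \<longrightarrow> \<kappa> x = 1)
         \<Longrightarrow> (\<exists>h\<in>H. \<forall>x\<in>G0. \<kappa> x = h x)"
  using F
proof (induction F arbitrary: G0 \<kappa> rule: finite_induct)
  case empty
  have "(\<lambda>x. 1) \<in> H" using subgroup.one_closed[OF H] by simp
  thus ?case using empty by auto
next
  case (insert \<eta> F)
  have eH: "\<eta> \<in> H" and FH: "F \<subseteq> H" using insert.prems by auto
  have e: "\<eta> \<in> characters" using subgroup.subset[OF H] eH by auto
  define G1 where "G1 = {x\<in>G0. \<eta> x = 1}"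
  have sg1: "sg G1" using insert.prems(2) char_0[OF e]
    by (auto simp: sg_def G1_def charD(1)[OF e] char_diff[OF e])
  have hyp1: "\<forall>x\<in>G1. (\<forall>\<eta>\<in>F. \<eta> x = 1) \<longrightarrow> \<kappa> x = 1"
    using insert.prems(4) unfolding G1_def by auto
  obtain h1 where h1: "h1 \<in> H" "\<forall>x\<in>G1. \<kappa> x = h1 x"
    using insert.IH[OF FH sg1 insert.prems(3) hyp1] by blast
  have h1c: "h1 \<in> characters" using subgroup.subset[OF H] h1(1) by auto
  define \<kappa>' where "\<kappa>' = (\<lambda>x. \<kappa> x * cnj (h1 x))"
  have k'c: "\<kappa>' \<in> characters" unfolding \<kappa>'_def
    by (intro char_mult_closed char_cnj_closed insert.prems(3) h1c)
  have "\<forall>x\<in>G0. \<eta> x = 1 \<longrightarrow> \<kappa>' x = 1"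
  proof (intro ballI impI)
    fix x assume "x \<in> G0" "\<eta> x = 1"
    hence "\<kappa> x = h1 x" using h1(2) unfolding G1_def by blast
    thus "\<kappa>' x = 1" unfolding \<kappa>'_def using char_cnj[OF h1c] by simp
  qed
  then obtain a where a: "\<forall>x\<in>G0. \<kappa>' x = \<eta> x ^ a"
    using one_char[OF cpt tors e k'c insert.prems(2)] by blast
  define h where "h = h1 \<otimes>\<^bsub>dual_group\<^esub> (\<lambda>x. \<eta> x ^ a)"
  have hH: "h \<in> H" unfolding h_def by (rule subgroup.m_closed[OF H h1(1) pow_in_subgroup[OF H eH]])
  have "\<forall>x\<in>G0. \<kappa> x = h x"
  proof
    fix x assume x: "x \<in> G0"
    have "\<kappa> x = \<kappa> x * (cnj (h1 x) * h1 x)" using norm1_cnj'[OF charD(2)[OF h1c]] by simp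
    also have "\<dots> = \<kappa>' x * h1 x" unfolding \<kappa>'_def by (simp add: mult.assoc)
    also have "\<dots> = h x" using a x unfolding h_def by (simp add: mult.commute)
    finally show "\<kappa> x = h x" .
  qed
  thus ?case using hH by blast
qed

lemma key_lemma:
  fixes H :: "('a::{topological_ab_group_add, t2_space} \<Rightarrow> complex) set"
  assumes cpt: "compact (UNIV::'a set)"
    and tors: "\<forall>x::'a. \<exists>n::nat. n > 0 \<and> (\<Sum>i<n. x) = 0"
    and H: "subgroup H dual_group" and c: "\<kappa> \<in> characters" and nH: "\<kappa> \<notin> H"
  shows "\<exists>x. (\<forall>\<eta>\<in>H. \<eta> x = 1) \<and> \<kappa> x \<noteq> 1"
proof (rule ccontr)
  assume "\<not> ?thesis"
  hence hyp: "\<forall>x. (\<forall>\<eta>\<in>H. \<eta> x = 1) \<longrightarrow> \<kappa> x = 1" by blast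
  have Hc: "\<eta> \<in> characters" if "\<eta> \<in> H" for \<eta> using subgroup.subset[OF H] that by auto
  define Z where "Z = {x. \<kappa> x \<noteq> 1}"
  have "Z = \<kappa> -` (range \<kappa> - {1})" unfolding Z_def by auto
  moreover have "closed (range \<kappa> - {1})"
    using char_finite_image[OF cpt tors c] by (intro finite_imp_closed) simp
  ultimately have "closed Z" using closed_vimage charD(3)[OF c] by metis
  hence cZ: "compact Z" using compact_Int_closed[OF cpt] by (metis inf_top_left)
  have "Z \<subseteq> (\<Union>\<eta>\<in>H. {x. \<eta> x \<noteq> 1})" using hyp unfolding Z_def by blast
  moreover have "open {x. \<eta> x \<noteq> 1}" if "\<eta> \<in> H" for \<eta>
    using open_Collect_neq[OF charD(3)[OF Hc[OF that]] continuous_on_const] .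
  ultimately obtain F where F: "F \<subseteq> H" "finite F" "Z \<subseteq> (\<Union>\<eta>\<in>F. {x. \<eta> x \<noteq> 1})"
    using compactE_image[OF cZ, of H "\<lambda>\<eta>. {x. \<eta> x \<noteq> 1}"] by metis
  have sgU: "sg (UNIV :: 'a set)" by (simp add: sg_def)
  have "\<forall>x\<in>UNIV. (\<forall>\<eta>\<in>F. \<eta> x = 1) \<longrightarrow> \<kappa> x = 1" using F(3) unfolding Z_def by blast
  then obtain h where "h \<in> H" "\<forall>x\<in>UNIV. \<kappa> x = h x"
    using multi_char[OF cpt tors H F(2) F(1) sgU c] by blast
  hence "\<kappa> = h" by auto
  with \<open>h \<in> H\<close> nH show False by simp
qed


definition is_tp :: "(('a::topological_ab_group_add \<Rightarrow> complex) \<Rightarrow> complex) \<Rightarrow> bool" where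
  "is_tp f \<longleftrightarrow> (\<exists>S c. finite S \<and> (\<forall>\<gamma>\<in>characters. f \<gamma> = trig_poly S c \<gamma>))"

lemma is_tp_index:
  fixes p :: "'i \<Rightarrow> 'a::topological_ab_group_add" and c :: "'i \<Rightarrow> complex"
  assumes I: "finite I"
  shows "is_tp (\<lambda>\<gamma>. \<Sum>i\<in>I. c i * \<gamma> (p i))"
proof -
  define c' where "c' y = (\<Sum>i\<in>{i\<in>I. p i = y}. c i)" for y
  have "(\<Sum>i\<in>I. c i * \<gamma> (p i)) = trig_poly (p ` I) c' \<gamma>" for \<gamma> :: "'a \<Rightarrow> complex"
  proof -
    have "(\<Sum>i\<in>I. c i * \<gamma> (p i)) = (\<Sum>y\<in>p ` I. \<Sum>i\<in>{i\<in>I. p i = y}. c i * \<gamma> (p i))"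
      by (rule sum.image_gen[OF I])
    also have "\<dots> = (\<Sum>y\<in>p ` I. c' y * \<gamma> y)"
      unfolding c'_def sum_distrib_right by (intro sum.cong refl) auto
    finally show ?thesis unfolding trig_poly_def .
  qed
  thus ?thesis unfolding is_tp_def using I by blast
qed

lemma is_tp_mult:
  assumes f: "is_tp f" and g: "is_tp g"
  shows "is_tp (\<lambda>\<gamma>. f \<gamma> * g \<gamma>)"
proof -
  obtain S c where S: "finite S" "\<forall>\<gamma>\<in>characters. f \<gamma> = trig_poly S c \<gamma>"
    using f unfolding is_tp_def by blast
  obtain T d where T: "finite T" "\<forall>\<gamma>\<in>characters. g \<gamma> = trig_poly T d \<gamma>"
    using g unfolding is_tp_def by blast
  have fin: "finite (S \<times> T)" using S(1) T(1) by simp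
  obtain U e where U: "finite U"
    "\<forall>\<gamma>\<in>characters. (\<Sum>i\<in>S \<times> T. (\<lambda>(x,y). c x * d y) i * \<gamma> ((\<lambda>(x,y). x + y) i)) = trig_poly U e \<gamma>"
    using is_tp_index[OF fin, of "\<lambda>(x,y). c x * d y" "\<lambda>(x,y). x + y"] unfolding is_tp_def by blast
  have "f \<gamma> * g \<gamma> = trig_poly U e \<gamma>" if gc: "\<gamma> \<in> characters" for \<gamma>
  proof -
    have "f \<gamma> * g \<gamma> = (\<Sum>x\<in>S. c x * \<gamma> x) * (\<Sum>y\<in>T. d y * \<gamma> y)"
      using S(2) T(2) gc unfolding trig_poly_def by simp
    also have "\<dots> = (\<Sum>x\<in>S. \<Sum>y\<in>T. (c x * \<gamma> x) * (d y * \<gamma> y))" by (rule sum_product)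
    also have "\<dots> = (\<Sum>(x,y)\<in>S \<times> T. (c x * \<gamma> x) * (d y * \<gamma> y))" by (rule sum.cartesian_product)
    also have "\<dots> = (\<Sum>i\<in>S \<times> T. (\<lambda>(x,y). c x * d y) i * \<gamma> ((\<lambda>(x,y). x + y) i))"
      by (intro sum.cong refl) (auto simp: charD(1)[OF gc] mult_ac)
    also have "\<dots> = trig_poly U e \<gamma>" using U(2) gc by blast
    finally show ?thesis .
  qed
  thus ?thesis unfolding is_tp_def using U(1) by blast
qed

lemma is_tp_lin: "is_tp (\<lambda>\<gamma>. \<gamma> x - (a::complex))"
proof -
  have "is_tp (\<lambda>\<gamma>. \<Sum>b\<in>(UNIV::bool set). (if b then 1 else -a) * \<gamma> (if b then x else 0))"
    by (rule is_tp_index) simp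
  then obtain S c where S: "finite S" "\<forall>\<gamma>\<in>characters.
      (\<Sum>b\<in>(UNIV::bool set). (if b then 1 else -a) * \<gamma> (if b then x else 0)) = trig_poly S c \<gamma>"
    unfolding is_tp_def by blast
  have "\<gamma> x - a = trig_poly S c \<gamma>" if gc: "\<gamma> \<in> characters" for \<gamma>
  proof -
    have "(\<Sum>b\<in>(UNIV::bool set). (if b then 1 else -a) * \<gamma> (if b then x else 0)) = \<gamma> x - a"
      using char_0[OF gc] by (simp add: UNIV_bool)
    thus ?thesis using S(2) gc by metis
  qed
  thus ?thesis unfolding is_tp_def using S(1) by blast
qed

lemma is_tp_one: "is_tp (\<lambda>\<gamma>. 1)"
proof -
  have "(\<lambda>\<gamma>::'a \<Rightarrow> complex. 1) \<gamma> = trig_poly {0::'a} (\<lambda>_. 1) \<gamma>" if "\<gamma> \<in> characters" for \<gamma>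
    using char_0[OF that] by (simp add: trig_poly_def)
  thus ?thesis unfolding is_tp_def by blast
qed

lemma is_tp_prod:
  assumes "finite R"
  shows "(\<forall>C\<in>R. is_tp (f C)) \<Longrightarrow> is_tp (\<lambda>\<gamma>. \<Prod>C\<in>R. f C \<gamma>)"
  using assms
proof (induction R rule: finite_induct)
  case empty thus ?case using is_tp_one by simp
next
  case (insert C R)
  have "is_tp (\<lambda>\<gamma>. f C \<gamma> * (\<Prod>C\<in>R. f C \<gamma>))"
    using insert by (intro is_tp_mult) auto
  thus ?case using insert(1,2) by simp
qed


lemma inv_in_H:
  assumes H: "subgroup H dual_group" and h: "h \<in> H"
  shows "(\<lambda>x. cnj (h x)) \<in> H"
proof -
  have hc: "h \<in> characters" using subgroup.subset[OF H] h by auto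
  show ?thesis using subgroup.m_inv_closed[OF H h] dual_inv[OF hc] by simp
qed

theorem theorem2p8:
  fixes K :: "('a::{topological_ab_group_add, t2_space} \<Rightarrow> complex) set"
  assumes "compact (UNIV :: 'a set)"
    and "\<forall>x::'a. \<exists>n::nat. n > 0 \<and> (\<Sum>i<n. x) = 0"
    and "K \<subseteq> characters"
  shows "strictly_positive_definite K \<longleftrightarrow> ubiquitous K"
proof
  note cpt = assms(1) and tors = assms(2) and Kc = assms(3)
  assume spd: "strictly_positive_definite K"
  show "ubiquitous K"
    unfolding ubiquitous_def
  proof (intro allI impI ballI)
    fix H :: "('a \<Rightarrow> complex) set" and \<gamma>0 :: "'a \<Rightarrow> complex"
    assume HH: "subgroup H dual_group \<and> finite (rcosets\<^bsub>dual_group\<^esub> H)"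
      and g0': "\<gamma>0 \<in> carrier dual_group"
    have H: "subgroup H dual_group" and finR: "finite (rcosets\<^bsub>dual_group\<^esub> H)" using HH by auto
    have g0: "\<gamma>0 \<in> characters" using g0' by simp
    have Hc: "\<eta> \<in> characters" if "\<eta> \<in> H" for \<eta> using subgroup.subset[OF H] that by auto
    have oneH: "(\<lambda>x. 1) \<in> H" using subgroup.one_closed[OF H] by simp
    show "(\<gamma>0 <#\<^bsub>dual_group\<^esub> H) \<inter> K \<noteq> {}"
    proof
      assume empty: "(\<gamma>0 <#\<^bsub>dual_group\<^esub> H) \<inter> K = {}"
      define R where "R = rcosets\<^bsub>dual_group\<^esub> H"
      have "\<exists>a. a \<in> C \<and> a \<in> characters" if "C \<in> R" for C
      proof -
        from that obtain a0 where a0: "a0 \<in> characters" "C = H #>\<^bsub>dual_group\<^esub> a0"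
          unfolding R_def RCOSETS_def by auto
        have "(\<lambda>x. 1) \<otimes>\<^bsub>dual_group\<^esub> a0 \<in> C" unfolding a0(2) r_coset_def using oneH by blast
        thus ?thesis using a0(1) by auto
      qed
      then obtain rep where rep: "\<forall>C\<in>R. rep C \<in> C \<and> rep C \<in> characters" by metis
      define B where "B = {C\<in>R. rep C \<notin> \<gamma>0 <#\<^bsub>dual_group\<^esub> H}"
      have finB: "finite B" using finR unfolding B_def R_def by simp
      have "\<exists>x. (\<forall>\<eta>\<in>H. \<eta> x = 1) \<and> rep C x \<noteq> \<gamma>0 x" if CB: "C \<in> B" for C
      proof -
        have rc: "rep C \<in> characters" "rep C \<notin> \<gamma>0 <#\<^bsub>dual_group\<^esub> H"
          using rep CB unfolding B_def by auto
        define \<kappa> where "\<kappa> = (\<lambda>x. rep C x * cnj (\<gamma>0 x))"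
        have kc: "\<kappa> \<in> characters" unfolding \<kappa>_def by (intro char_mult_closed char_cnj_closed rc(1) g0)
        have "\<kappa> \<notin> H"
        proof
          assume kH: "\<kappa> \<in> H"
          have "rep C = \<gamma>0 \<otimes>\<^bsub>dual_group\<^esub> \<kappa>"
          proof
            fix x
            have "rep C x = rep C x * (cnj (\<gamma>0 x) * \<gamma>0 x)" using norm1_cnj'[OF charD(2)[OF g0]] by simp
            thus "rep C x = (\<gamma>0 \<otimes>\<^bsub>dual_group\<^esub> \<kappa>) x" unfolding \<kappa>_def by (simp add: mult_ac)
          qed
          hence "rep C \<in> \<gamma>0 <#\<^bsub>dual_group\<^esub> H" unfolding l_coset_def using kH by blast
          with rc(2) show False by blast
        qed
        from key_lemma[OF cpt tors H kc this] obtain x where x: "\<forall>\<eta>\<in>H. \<eta> x = 1" "\<kappa> x \<noteq> 1" by blast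
        have "rep C x \<noteq> \<gamma>0 x"
        proof
          assume "rep C x = \<gamma>0 x"
          hence "\<kappa> x = 1" unfolding \<kappa>_def using char_cnj[OF g0] by simp
          with x(2) show False by blast
        qed
        thus ?thesis using x(1) by blast
      qed
      then obtain xf where xf: "\<forall>C\<in>B. (\<forall>\<eta>\<in>H. \<eta> (xf C) = 1) \<and> rep C (xf C) \<noteq> \<gamma>0 (xf C)" by metis
      define P where "P = (\<lambda>\<gamma>. \<Prod>C\<in>B. (\<gamma> (xf C) - rep C (xf C)))"
      have "is_tp P" unfolding P_def using finB by (intro is_tp_prod) (auto intro: is_tp_lin)
      then obtain S c where S: "finite S" "\<forall>\<gamma>\<in>characters. P \<gamma> = trig_poly S c \<gamma>"
        unfolding is_tp_def by blast
      have "\<forall>\<gamma>\<in>K. trig_poly S c \<gamma> = 0"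
      proof
        fix \<gamma> assume gK: "\<gamma> \<in> K"
        have gc: "\<gamma> \<in> characters" using gK Kc by blast
        define C where "C = H #>\<^bsub>dual_group\<^esub> \<gamma>"
        have CR: "C \<in> R" unfolding C_def R_def RCOSETS_def using gc by auto
        have rC: "rep C \<in> C" using rep CR by blast
        have Ceq: "C = (\<Union>h\<in>H. {h \<otimes>\<^bsub>dual_group\<^esub> \<gamma>})" unfolding C_def r_coset_def ..
        obtain h where h: "h \<in> H" "rep C = h \<otimes>\<^bsub>dual_group\<^esub> \<gamma>"
          using rC unfolding Ceq by blast
        have hc: "h \<in> characters" using Hc h(1) .
        have "C \<in> B"
        proof -
          have "rep C \<notin> \<gamma>0 <#\<^bsub>dual_group\<^esub> H"
          proof
            assume "rep C \<in> \<gamma>0 <#\<^bsub>dual_group\<^esub> H"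
            then obtain h' where h': "h' \<in> H" "rep C = \<gamma>0 \<otimes>\<^bsub>dual_group\<^esub> h'"
              unfolding l_coset_def by blast
            define h'' where "h'' = h' \<otimes>\<^bsub>dual_group\<^esub> (\<lambda>x. cnj (h x))"
            have h''H: "h'' \<in> H" unfolding h''_def
              by (rule subgroup.m_closed[OF H h'(1) inv_in_H[OF H h(1)]])
            have "\<gamma> = \<gamma>0 \<otimes>\<^bsub>dual_group\<^esub> h''"
            proof
              fix x
              have e1: "h x * \<gamma> x = \<gamma>0 x * h' x" using h(2) h'(2) by (metis dual_simps(2))
              have "\<gamma> x = \<gamma> x * (h x * cnj (h x))" using char_cnj[OF hc] by simp
              also have "\<dots> = (h x * \<gamma> x) * cnj (h x)" by (simp add: mult_ac)
              also have "\<dots> = \<gamma>0 x * h' x * cnj (h x)" unfolding e1 ..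
              finally show "\<gamma> x = (\<gamma>0 \<otimes>\<^bsub>dual_group\<^esub> h'') x" unfolding h''_def by (simp add: mult_ac)
            qed
            hence "\<gamma> \<in> \<gamma>0 <#\<^bsub>dual_group\<^esub> H" unfolding l_coset_def using h''H by blast
            with gK empty show False by blast
          qed
          thus ?thesis unfolding B_def using CR by blast
        qed
        moreover have "\<gamma> (xf C) - rep C (xf C) = 0"
        proof -
          have "h (xf C) = 1" using xf \<open>C \<in> B\<close> h(1) by blast
          thus ?thesis using h(2) by simp
        qed
        ultimately have "P \<gamma> = 0" unfolding P_def using finB by (metis prod_zero_iff)
        thus "trig_poly S c \<gamma> = 0" using S(2) gc by simp
      qed
      hence "\<forall>\<gamma>\<in>characters. trig_poly S c \<gamma> = 0"
        using spd S(1) unfolding strictly_positive_definite_def by blast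
      hence "P \<gamma>0 = 0" using S(2) g0 by simp
      moreover have "P \<gamma>0 \<noteq> 0" unfolding P_def using finB xf by (simp add: prod_zero_iff) (metis)
      ultimately show False by blast
    qed
  qed
next
  note cpt = assms(1) and tors = assms(2) and Kc = assms(3)
  assume ubq: "ubiquitous K"
  show "strictly_positive_definite K"
    unfolding strictly_positive_definite_def
  proof (intro allI impI ballI)
    fix S :: "'a set" and c :: "'a \<Rightarrow> complex" and \<gamma> :: "'a \<Rightarrow> complex"
    assume S: "finite S" and van: "\<forall>\<gamma>\<in>K. trig_poly S c \<gamma> = 0" and gc: "\<gamma> \<in> characters"
    define H where "H = {\<eta>\<in>characters. \<forall>x\<in>S. \<eta> x = 1}"
    have Hsub: "subgroup H dual_group"
    proof (rule group.subgroupI[OF dual_group])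
      show "H \<subseteq> carrier dual_group" unfolding H_def by auto
      show "H \<noteq> {}" unfolding H_def using char_one by auto
      fix a assume "a \<in> H"
      thus "inv\<^bsub>dual_group\<^esub> a \<in> H" unfolding H_def by (auto simp: dual_inv char_cnj_closed)
    next
      fix a b assume "a \<in> H" "b \<in> H"
      thus "a \<otimes>\<^bsub>dual_group\<^esub> b \<in> H" unfolding H_def by (auto simp: char_mult_closed)
    qed
    have coset_sub: "H #>\<^bsub>dual_group\<^esub> a \<subseteq> H #>\<^bsub>dual_group\<^esub> b"
      if ab: "a \<in> characters" "b \<in> characters" "\<forall>x\<in>S. a x = b x" for a b
    proof
      fix z assume "z \<in> H #>\<^bsub>dual_group\<^esub> a"
      then obtain h where h: "h \<in> H" "z = h \<otimes>\<^bsub>dual_group\<^esub> a" unfolding r_coset_def by blast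
      define h' where "h' = (\<lambda>x. h x * a x * cnj (b x))"
      have hc: "h \<in> characters" using h(1) unfolding H_def by blast
      have "h' \<in> H" unfolding H_def h'_def using h(1) ab char_cnj[OF ab(2)]
        by (auto simp: H_def intro!: char_mult_closed char_cnj_closed hc)
      moreover have "z = h' \<otimes>\<^bsub>dual_group\<^esub> b"
      proof
        fix x
        have "h x * a x = h x * a x * (cnj (b x) * b x)" using norm1_cnj'[OF charD(2)[OF ab(2)]] by simp
        thus "z x = (h' \<otimes>\<^bsub>dual_group\<^esub> b) x" unfolding h(2) h'_def by (simp add: mult_ac)
      qed
      ultimately show "z \<in> H #>\<^bsub>dual_group\<^esub> b" unfolding r_coset_def by blast
    qed
    have fin: "finite (rcosets\<^bsub>dual_group\<^esub> H)"
    proof -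
      obtain n :: "'a \<Rightarrow> nat" where n: "\<forall>x. n x > (0::nat) \<and> (\<Sum>i<n x. x) = 0" using choice[OF tors] by blast
      define Rs where "Rs = PiE S (\<lambda>x. {z::complex. z ^ n x = 1})"
      have finRs: "finite Rs" unfolding Rs_def using S n
        by (intro finite_PiE) (auto intro: finite_roots_unity)
      define g where "g r = H #>\<^bsub>dual_group\<^esub> (SOME a. a \<in> characters \<and> restrict a S = r)" for r
      have "rcosets\<^bsub>dual_group\<^esub> H \<subseteq> g ` Rs"
      proof
        fix C assume "C \<in> rcosets\<^bsub>dual_group\<^esub> H"
        then obtain a where a: "a \<in> characters" "C = H #>\<^bsub>dual_group\<^esub> a"
          unfolding RCOSETS_def by auto
        have rRs: "restrict a S \<in> Rs" unfolding Rs_def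
        proof (rule restrict_PiE_iff[THEN iffD2], intro ballI)
          fix x assume "x \<in> S"
          have "a x ^ n x = 1" using char_sum[OF a(1), where n = "n x" and x = x] n char_0[OF a(1)] by simp
          thus "a x \<in> {z. z ^ n x = 1}" by simp
        qed
        define a' where "a' = (SOME a'. a' \<in> characters \<and> restrict a' S = restrict a S)"
        have a': "a' \<in> characters \<and> restrict a' S = restrict a S"
          unfolding a'_def by (rule someI[of _ a]) (simp add: a(1))
        have eqS: "\<forall>x\<in>S. a x = a' x" using a' by (metis restrict_apply')
        have "C = H #>\<^bsub>dual_group\<^esub> a'"
          unfolding a(2) using coset_sub[OF a(1) conjunct1[OF a'] eqS]
            coset_sub[OF conjunct1[OF a'] a(1)] eqS by auto
        thus "C \<in> g ` Rs" unfolding g_def a'_def using rRs by blast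
      qed
      thus ?thesis using finRs finite_surj by blast
    qed
    from ubq Hsub fin gc have "(\<gamma> <#\<^bsub>dual_group\<^esub> H) \<inter> K \<noteq> {}" unfolding ubiquitous_def by auto
    then obtain k h where kh: "k \<in> K" "h \<in> H" "k = \<gamma> \<otimes>\<^bsub>dual_group\<^esub> h"
      unfolding l_coset_def by blast
    have "trig_poly S c k = trig_poly S c \<gamma>"
      unfolding trig_poly_def using kh(2,3) unfolding H_def by (intro sum.cong refl) auto
    thus "trig_poly S c \<gamma> = 0" using van kh(1) by simp
  qed
qed

end
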